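(* Let $V$ and $W$ be separable real Hilbert spaces with inner products $a(\cdot,\cdot)$ and $b(\cdot,\cdot)$ and induced norms $\|\cdot\|_a$, $\|\cdot\|_b$, and let $\gamma:V\to W$ be a compact linear operator. Let $V_h$ be a finite-dimensional space with $\dim V_h=d$, such that $V$ and $V_h$ are subspaces of a common real vector space, and set $V(h):=V+V_h$. Let $\widehat a(\cdot,\cdot)$ be a symmetric positive semidefinite bilinear form on $V(h)$ whose restriction to $V_h$ is an inner product and which satisfies $\widehat a(u,v)=a(u,v)$ for all $u,v\in V$; write $\|v\|_a:=\widehat a(v,v)^{1/2}$ for $v\in V(h)$ (a seminorm). Let $\widehat\gamma:V(h)\to W$ be a (compact) linear operator with $\widehat\gamma u=\gamma u$ for $u\in V$. Define $P_h:V(h)\to V_h$ by $\widehat a(u-P_hu,v_h)=0$ for all $v_h\in V_h$. Define, for $k\ge 1$ (with $k\le \dim V$), $$\mu_k:=\sup_{H_k\subset V,\ \dim H_k=k}\ \inf_{v\in H_k\setminus\{0\}}\frac{b(\gamma v,\gamma v)}{a(v,v)},$$ and for $1\le k\le d$, $$\mu_{k,h}:=\max_{H_{k,h}\subset V_h,\ \dim H_{k,h}=k}\ \min_{v_h\in H_{k,h}\setminus\{0\}}\frac{b(\widehat\gamma v_h,\widehat\gamma v_h)}{\widehat a(v_h,v_h)},$$ so that $\mu_{1,h}\ge\cdots\ge\mu_{d',h}>\mu_{d'+1,h}=\cdots=\mu_{d,h}=0$ for some $d'\le d$. Suppose there is a number $C_h\ge 0$ such that $$\|\widehat\gamma(I-P_h)v\|_b\le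 C_h\,\|(I-P_h)v\|_a\qquad\forall v\in V(h).$$ Then $\mu_k\le \mu_{k,h}+C_h^2$ for $k=1,\dots,d$ (with $k\le\dim V$). Consequently, writing $\lambda_k:=1/\mu_k$ (with $\lambda_k:=+\infty$ if $\mu_k=0$) and $\lambda_{k,h}:=1/\mu_{k,h}$ for $1\le k\le d'$, $$\lambda_k\ \ge\ \frac{\lambda_{k,h}}{1+C_h^2\lambda_{k,h}},\qquad k=1,\dots,d'.$$ No positive definiteness of $\widehat a$ on $V(h)$ is assumed.
   Context: The numbers $\mu_k$ are the eigenvalues (in nonincreasing order, with multiplicity, possibly including $0$) of the compact self-adjoint positive semidefinite operator $G\gamma:V\to V$, where $G:W\to V$ is defined by $a(Gf,v)=b(f,\gamma v)$ for all $v\in V$; equivalently they are the eigenvalues $\mu$ of $b(\gamma u,\gamma v)=\mu\,a(u,v)$ for all $v\in V$, and $\lambda_k=1/\mu_k$ are the eigenvalues of $a(u,v)=\lambda\, b(\gamma u,\gamma v)$. The $\mu_{k,h}$ are the eigenvalues of the discrete problem $b(\widehat\gamma u_h,\widehat\gamma v_h)=\mu_h\widehat a(u_h,v_h)$ for all $v_h\in V_h$. *)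

theory Defs
  imports "HOL-Analysis.Analysis"
begin

definition dim_subspaces :: "'a::real_vector set \<Rightarrow> nat \<Rightarrow> 'a set set" where
  "dim_subspaces S k = {H. H \<subseteq> S \<and> real_vector.subspace H \<and>
      (\<exists>B. finite B \<and> real_vector.independent B \<and> real_vector.span B = H \<and> card B = k)}"

definition compact_operator :: "('a::real_normed_vector \<Rightarrow> 'b::real_normed_vector) \<Rightarrow> bool" where
  "compact_operator T \<longleftrightarrow> linear T \<and> (\<forall>S. bounded S \<longrightarrow> compact (closure (T ` S)))"

definition separable_space :: "'a::metric_space itself \<Rightarrow> bool" where
  "separable_space _ \<longleftrightarrow> (\<exists>D::'a set. countable D \<and> closure D = UNIV)"

definition linear_on_set :: "'a::real_vector set \<Rightarrow> ('a \<Rightarrow> 'b::real_vector) \<Rightarrow> bool" where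
  "linear_on_set S f \<longleftrightarrow> (\<forall>x\<in>S. \<forall>y\<in>S. f (x + y) = f x + f y) \<and> (\<forall>c. \<forall>x\<in>S. f (c *\<^sub>R x) = c *\<^sub>R f x)"

definition bilinear_on_set :: "'a::real_vector set \<Rightarrow> ('a \<Rightarrow> 'a \<Rightarrow> real) \<Rightarrow> bool" where
  "bilinear_on_set S B \<longleftrightarrow> (\<forall>x\<in>S. linear_on_set S (B x)) \<and> (\<forall>y\<in>S. linear_on_set S (\<lambda>x. B x y))"

definition mu_V :: "('v::real_inner \<Rightarrow> 'w::real_inner) \<Rightarrow> nat \<Rightarrow> real" where
  "mu_V \<gamma> k = (SUP H\<in>dim_subspaces (UNIV::'v set) k. INF v\<in>H - {0}. (\<gamma> v \<bullet> \<gamma> v) / (v \<bullet> v))"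

definition mu_h :: "'e::real_vector set \<Rightarrow> ('e \<Rightarrow> 'e \<Rightarrow> real) \<Rightarrow> ('e \<Rightarrow> 'w::real_inner) \<Rightarrow> nat \<Rightarrow> real" where
  "mu_h Vh ahat gh k = (SUP H\<in>dim_subspaces Vh k. INF v\<in>H - {0}. (gh v \<bullet> gh v) / ahat v v)"

definition lam :: "real \<Rightarrow> ereal" where
  "lam \<mu> = (if \<mu> = 0 then \<infinity> else ereal (1 / \<mu>))"

end

theory Submission
  imports Defs
begin

lemma bl_addL: "bilinear_on_set U a \<Longrightarrow> x\<in>U \<Longrightarrow> y\<in>U \<Longrightarrow> z\<in>U \<Longrightarrow> a (x+y) z = a x z + a y z"
  unfolding bilinear_on_set_def linear_on_set_def by blast
lemma bl_addR: "bilinear_on_set U a \<Longrightarrow> x\<in>U \<Longrightarrow> y\<in>U \<Longrightarrow> z\<in>U \<Longrightarrow> a z (x+y) = a z x + a z y"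
  unfolding bilinear_on_set_def linear_on_set_def by blast
lemma bl_scaleL: "bilinear_on_set U a \<Longrightarrow> x\<in>U \<Longrightarrow> z\<in>U \<Longrightarrow> a (c *\<^sub>R x) z = c * a x z"
  unfolding bilinear_on_set_def linear_on_set_def by (metis real_scaleR_def)
lemma bl_scaleR: "bilinear_on_set U a \<Longrightarrow> x\<in>U \<Longrightarrow> z\<in>U \<Longrightarrow> a z (c *\<^sub>R x) = c * a z x"
  unfolding bilinear_on_set_def linear_on_set_def by (metis real_scaleR_def)
lemma bl_diffL: "subspace U \<Longrightarrow> bilinear_on_set U a \<Longrightarrow> x\<in>U \<Longrightarrow> y\<in>U \<Longrightarrow> z\<in>U \<Longrightarrow> a (x-y) z = a x z - a y z"
proof -
  assume U: "subspace U" and b: "bilinear_on_set U a" and xyz: "x\<in>U" "y\<in>U" "z\<in>U"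
  have m: "(-1) *\<^sub>R y \<in> U" using U xyz subspace_scale by blast
  have "a (x + (-1) *\<^sub>R y) z = a x z + a ((-1) *\<^sub>R y) z" using bl_addL[OF b xyz(1) m xyz(3)] .
  also have "a ((-1) *\<^sub>R y) z = - a y z" using bl_scaleL[OF b xyz(2) xyz(3), of "-1"] by simp
  finally show ?thesis by simp
qed
lemma bl_diffR: "subspace U \<Longrightarrow> bilinear_on_set U a \<Longrightarrow> x\<in>U \<Longrightarrow> y\<in>U \<Longrightarrow> z\<in>U \<Longrightarrow> a z (x-y) = a z x - a z y"
proof -
  assume U: "subspace U" and b: "bilinear_on_set U a" and xyz: "x\<in>U" "y\<in>U" "z\<in>U"
  have m: "(-1) *\<^sub>R y \<in> U" using U xyz subspace_scale by blast
  have "a z (x + (-1) *\<^sub>R y) = a z x + a z ((-1) *\<^sub>R y)" using bl_addR[OF b xyz(1) m xyz(3)] .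
  also have "a z ((-1) *\<^sub>R y) = - a z y" using bl_scaleR[OF b xyz(2) xyz(3), of "-1"] by simp
  finally show ?thesis by simp
qed
lemma bl_zeroL: "subspace U \<Longrightarrow> bilinear_on_set U a \<Longrightarrow> z\<in>U \<Longrightarrow> a 0 z = 0"
  using bl_scaleL[of U a z z 0] by simp
lemma bl_zeroR: "subspace U \<Longrightarrow> bilinear_on_set U a \<Longrightarrow> z\<in>U \<Longrightarrow> a z 0 = 0"
  using bl_scaleR[of U a z z 0] by simp

lemma lo_add: "linear_on_set U g \<Longrightarrow> x\<in>U \<Longrightarrow> y\<in>U \<Longrightarrow> g (x+y) = g x + g y"
  unfolding linear_on_set_def by blast
lemma lo_scale: "linear_on_set U g \<Longrightarrow> x\<in>U \<Longrightarrow> g (c *\<^sub>R x) = c *\<^sub>R g x"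
  unfolding linear_on_set_def by blast
lemma lo_zero: "linear_on_set U g \<Longrightarrow> x\<in>U \<Longrightarrow> g 0 = 0"
  using lo_scale[of U g x 0] by simp
lemma lo_mono: "linear_on_set U g \<Longrightarrow> V \<subseteq> U \<Longrightarrow> linear_on_set V g"
  unfolding linear_on_set_def by blast
lemma bl_mono: "bilinear_on_set U g \<Longrightarrow> V \<subseteq> U \<Longrightarrow> bilinear_on_set V g"
  unfolding bilinear_on_set_def using lo_mono by (meson subsetD)

lemma cs2: fixes a x c y :: real shows "(a*x + c*y)^2 \<le> (a^2 + c^2) * (x^2 + y^2)"
proof -
  have "0 \<le> (a*y - c*x)^2" by simp
  thus ?thesis by (simp add: power2_eq_square algebra_simps)
qed

lemma lo_diff: "subspace U \<Longrightarrow> linear_on_set U g \<Longrightarrow> x\<in>U \<Longrightarrow> y\<in>U \<Longrightarrow> g (x-y) = g x - g y"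
proof -
  assume U: "subspace U" and g: "linear_on_set U g" and xy: "x\<in>U" "y\<in>U"
  have m: "(-1) *\<^sub>R y \<in> U" using U xy subspace_scale by blast
  have "g (x + (-1) *\<^sub>R y) = g x + g ((-1) *\<^sub>R y)" using lo_add[OF g xy(1) m] .
  also have "g ((-1) *\<^sub>R y) = - g y" using lo_scale[OF g xy(2), of "-1"] by simp
  finally show ?thesis by simp
qed

lemma fin_proj_bound:
  fixes a :: "'e::real_vector \<Rightarrow> 'e \<Rightarrow> real" and g :: "'e \<Rightarrow> 'w::real_inner"
  assumes U: "subspace U" and bil: "bilinear_on_set U a" and sym: "\<forall>x\<in>U. \<forall>y\<in>U. a x y = a y x"
    and pd: "\<forall>v\<in>U. v \<noteq> 0 \<longrightarrow> 0 < a v v" and lin: "linear_on_set U g"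
    and fin: "finite S" and SU: "S \<subseteq> U"
  shows "(\<exists>M\<ge>0. \<forall>w\<in>span S. g w \<bullet> g w \<le> M * a w w) \<and> (\<forall>x\<in>U. \<exists>p\<in>span S. \<forall>s\<in>span S. a (x - p) s = 0)"
  using fin SU
proof (induction S rule: finite_induct)
  case empty
  have "\<forall>w\<in>span {}. g w \<bullet> g w \<le> 0 * a w w"
    using lo_zero[OF lin subspace_0[OF U]] by auto
  moreover have "\<forall>x\<in>U. \<exists>p\<in>span {}. \<forall>s\<in>span {}. a (x - p) s = 0"
    using bl_zeroR[OF U bil] by auto
  ultimately show ?case by blast
next
  case (insert b S)
  have SU: "S \<subseteq> U" and bU: "b \<in> U" using insert.prems by auto
  have spU: "span S \<subseteq> U" using span_minimal[OF SU U] .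
  have spU': "span (insert b S) \<subseteq> U" using span_minimal[OF insert.prems U] .
  obtain M where M0: "M \<ge> 0" and M: "\<forall>w\<in>span S. g w \<bullet> g w \<le> M * a w w"
    and P: "\<forall>x\<in>U. \<exists>p\<in>span S. \<forall>s\<in>span S. a (x - p) s = 0"
    using insert.IH[OF SU] by blast
  obtain s0 where s0: "s0 \<in> span S" and s0o: "\<forall>s\<in>span S. a (b - s0) s = 0" using P bU by blast
  define r where "r = b - s0"
  have s0U: "s0 \<in> U" using s0 spU by auto
  have rU: "r \<in> U" unfolding r_def using U bU s0U subspace_diff by blast
  show ?case
  proof (cases "r = 0")
    case True
    then have "b \<in> span S" using s0 unfolding r_def by simp
    then have "span (insert b S) = span S" by (rule span_redundant)
    then show ?thesis using M0 M P by auto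
  next
    case False
    have Ar: "0 < a r r" using pd rU False by auto
    have ro: "a r q = 0" "a q r = 0" if "q \<in> span S" for q
      using s0o that sym rU spU unfolding r_def[symmetric] by (auto simp: subset_iff)
    have rsp: "r \<in> span (insert b S)" unfolding r_def
      using span_diff[OF span_base[of b "insert b S"] span_mono[of S "insert b S", THEN subsetD, OF _ s0]] by auto
    have dec: "\<exists>q t. q \<in> span S \<and> w = q + t *\<^sub>R r" if wi: "w \<in> span (insert b S)" for w
    proof -
      obtain t where t: "w - t *\<^sub>R b \<in> span S" using wi unfolding span_insert by blast
      have "w - t *\<^sub>R b + t *\<^sub>R s0 \<in> span S" using span_add[OF t span_scale[OF s0]] .
      moreover have "w = (w - t *\<^sub>R b + t *\<^sub>R s0) + t *\<^sub>R r" unfolding r_def by (simp add: algebra_simps)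
      ultimately show ?thesis by blast
    qed
    have Aw: "a (q + t *\<^sub>R r) (q + t *\<^sub>R r) = a q q + t^2 * a r r" if q: "q \<in> span S" for q t
    proof -
      have qU: "q \<in> U" using q spU by auto
      have trU: "t *\<^sub>R r \<in> U" using U rU subspace_scale by blast
      have "a (q + t *\<^sub>R r) (q + t *\<^sub>R r) = a q (q + t *\<^sub>R r) + a (t *\<^sub>R r) (q + t *\<^sub>R r)"
        using bl_addL[OF bil qU trU] U qU trU subspace_add by blast
      also have "\<dots> = a q q + a q (t *\<^sub>R r) + (a (t *\<^sub>R r) q + a (t *\<^sub>R r) (t *\<^sub>R r))"
        using bl_addR[OF bil qU trU qU] bl_addR[OF bil qU trU trU] by simp
      also have "\<dots> = a q q + t * a q r + (t * a r q + t * (t * a r r))"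
        using bl_scaleR[OF bil rU qU] bl_scaleL[OF bil rU qU] bl_scaleL[OF bil rU trU] bl_scaleR[OF bil rU rU]
        by simp
      also have "\<dots> = a q q + t^2 * a r r" using ro[OF q] by (simp add: power2_eq_square)
      finally show ?thesis .
    qed
    define M' where "M' = 2 * M + 2 * (g r \<bullet> g r) / a r r"
    have M'0: "M' \<ge> 0" unfolding M'_def using M0 Ar by auto
    have bound: "\<forall>w\<in>span (insert b S). g w \<bullet> g w \<le> M' * a w w"
    proof
      fix w assume w: "w \<in> span (insert b S)"
      obtain q t where q: "q \<in> span S" and wq: "w = q + t *\<^sub>R r" using dec[OF w] by blast
      have qU: "q \<in> U" using q spU by auto
      have gw: "g w = g q + t *\<^sub>R g r"
        unfolding wq using lo_add[OF lin qU, of "t *\<^sub>R r"] lo_scale[OF lin rU] U rU subspace_scale by metis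
      have Aq: "0 \<le> a q q" using pd qU bl_zeroL[OF U bil qU] by (cases "q = 0") auto
      have "g w \<bullet> g w = (norm (g q + t *\<^sub>R g r))^2" by (simp add: gw power2_norm_eq_inner)
      also have "\<dots> \<le> (norm (g q) + norm (t *\<^sub>R g r))^2"
        by (rule power_mono[OF norm_triangle_ineq]) simp
      also have "\<dots> \<le> 2 * (norm (g q))^2 + 2 * (norm (t *\<^sub>R g r))^2"
      proof -
        have "0 \<le> (norm (g q) - norm (t *\<^sub>R g r))^2" by simp
        thus ?thesis by (simp add: power2_eq_square algebra_simps)
      qed
      also have "\<dots> = 2 * (g q \<bullet> g q) + t^2 * (2 * (g r \<bullet> g r))"
        by (simp add: power2_norm_eq_inner power_mult_distrib)
      also have "\<dots> \<le> 2 * (M * a q q) + t^2 * (2 * (g r \<bullet> g r))"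
        using M q by auto
      also have "\<dots> = 2 * M * a q q + (2 * (g r \<bullet> g r) / a r r) * (t^2 * a r r)"
        using Ar by (simp add: field_simps)
      also have "\<dots> \<le> M' * a q q + M' * (t^2 * a r r)"
      proof (rule add_mono)
        show "2 * M * a q q \<le> M' * a q q" using Aq Ar unfolding M'_def
          by (intro mult_right_mono) (auto intro!: divide_nonneg_pos)
        show "2 * (g r \<bullet> g r) / a r r * (t\<^sup>2 * a r r) \<le> M' * (t\<^sup>2 * a r r)" using M0 Ar unfolding M'_def
          by (intro mult_right_mono) auto
      qed
      also have "\<dots> = M' * a w w" unfolding wq Aw[OF q] by (simp add: algebra_simps)
      finally show "g w \<bullet> g w \<le> M' * a w w" .
    qed
    have proj: "\<forall>x\<in>U. \<exists>p\<in>span (insert b S). \<forall>s\<in>span (insert b S). a (x - p) s = 0"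
    proof
      fix x assume xU: "x \<in> U"
      obtain p where p: "p \<in> span S" and po: "\<forall>s\<in>span S. a (x - p) s = 0" using P xU by blast
      have pU: "p \<in> U" using p spU by auto
      define c where "c = a (x - p) r / a r r"
      have xpU: "x - p \<in> U" using U xU pU subspace_diff by blast
      have crU: "c *\<^sub>R r \<in> U" using U rU subspace_scale by blast
      have "p + c *\<^sub>R r \<in> span (insert b S)"
        using span_add[OF span_mono[of S "insert b S", THEN subsetD, OF _ p] span_scale[OF rsp]] by auto
      moreover have "a (x - (p + c *\<^sub>R r)) s = 0" if s: "s \<in> span (insert b S)" for s
      proof -
        obtain q t where q: "q \<in> span S" and sq: "s = q + t *\<^sub>R r" using dec[OF s] by blast
        have qU: "q \<in> U" using q spU by auto
        have trU: "t *\<^sub>R r \<in> U" using U rU subspace_scale by blast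
        have e: "x - (p + c *\<^sub>R r) = (x - p) - c *\<^sub>R r" by simp
        have "a (x - (p + c *\<^sub>R r)) s = a (x - p) s - a (c *\<^sub>R r) s"
          unfolding e using bl_diffL[OF U bil xpU crU] s spU' by auto
        also have "\<dots> = a (x - p) q + t * a (x - p) r - c * (a r q + t * a r r)"
          unfolding sq using bl_addR[OF bil qU trU xpU] bl_addR[OF bil qU trU rU] bl_scaleR[OF bil rU xpU]
            bl_scaleR[OF bil rU rU] bl_scaleL[OF bil rU, of "q + t *\<^sub>R r"] U qU trU subspace_add
          by (metis (no_types, lifting) distrib_left)
        also have "\<dots> = 0" using po q ro[OF q] Ar unfolding c_def by (simp add: field_simps)
        finally show ?thesis .
      qed
      ultimately show "\<exists>p\<in>span (insert b S). \<forall>s\<in>span (insert b S). a (x - p) s = 0" by blast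
    qed
    show ?thesis using bound proj M'0 by blast
  qed
qed

lemma dim_subspaces_alt: "dim_subspaces S k = {H. H \<subseteq> S \<and> subspace H \<and>
      (\<exists>B. finite B \<and> independent B \<and> span B = H \<and> card B = k)}"
  by (simp add: dim_subspaces_def dependent_raw_def subspace_raw_def span_raw_def)

lemma dim_sub_nz: "H \<in> dim_subspaces S k \<Longrightarrow> 1 \<le> k \<Longrightarrow> \<exists>h\<in>H. h \<noteq> 0"
proof -
  assume H: "H \<in> dim_subspaces S k" and k: "1 \<le> k"
  then obtain B where B: "finite B" "independent B" "span B = H" "card B = k"
    unfolding dim_subspaces_alt by auto
  then have "B \<noteq> {}" using k by auto
  then obtain b where b: "b \<in> B" by auto
  have "b \<noteq> 0" using B(2) b dependent_zero by blast
  moreover have "b \<in> H" using b B(3) span_superset by blast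
  ultimately show ?thesis by blast
qed

lemma dim_sub_sub: "H \<in> dim_subspaces S k \<Longrightarrow> H \<subseteq> S"
  unfolding dim_subspaces_def by auto

theorem theorem3p1:
  fixes \<gamma> :: "'v::{real_inner, complete_space} \<Rightarrow> 'w::{real_inner, complete_space}"
    and \<iota> :: "'v \<Rightarrow> 'e::real_vector"
    and Vh :: "'e set" and d :: nat
    and ahat :: "'e \<Rightarrow> 'e \<Rightarrow> real"
    and ghat :: "'e \<Rightarrow> 'w"
    and Ph :: "'e \<Rightarrow> 'e"
    and C :: real
  defines "Vsum \<equiv> {\<iota> u + w | u w. w \<in> Vh}"
  assumes sepV: "separable_space TYPE('v)"
    and sepW: "separable_space TYPE('w)"
    and gamma: "compact_operator \<gamma>"
    and iota: "linear \<iota>" "inj \<iota>"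
    and Vh: "Vh \<in> dim_subspaces UNIV d"
    and ahat_bil: "bilinear_on_set Vsum ahat"
    and ahat_sym: "\<forall>u\<in>Vsum. \<forall>v\<in>Vsum. ahat u v = ahat v u"
    and ahat_psd: "\<forall>v\<in>Vsum. 0 \<le> ahat v v"
    and ahat_pd_h: "\<forall>v\<in>Vh. v \<noteq> 0 \<longrightarrow> 0 < ahat v v"
    and ahat_V: "\<forall>u v. ahat (\<iota> u) (\<iota> v) = u \<bullet> v"
    and ghat_lin: "linear_on_set Vsum ghat"
    and ghat_V: "\<forall>u. ghat (\<iota> u) = \<gamma> u"
    and Ph: "\<forall>u\<in>Vsum. Ph u \<in> Vh \<and> (\<forall>vh\<in>Vh. ahat (u - Ph u) vh = 0)"
    and C: "0 \<le> C"
    and Ch: "\<forall>v\<in>Vsum. norm (ghat (v - Ph v)) \<le> C * sqrt (ahat (v - Ph v) (v - Ph v))"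
  shows "(\<forall>k. 1 \<le> k \<and> k \<le> d \<and> dim_subspaces (UNIV::'v set) k \<noteq> {} \<longrightarrow>
            mu_V \<gamma> k \<le> mu_h Vh ahat ghat k + C\<^sup>2)
       \<and> (let d' = card {k\<in>{1..d}. 0 < mu_h Vh ahat ghat k} in
          \<forall>k. 1 \<le> k \<and> k \<le> d' \<and> dim_subspaces (UNIV::'v set) k \<noteq> {} \<longrightarrow>
            lam (mu_V \<gamma> k) \<ge> ereal ((1 / mu_h Vh ahat ghat k) /
                                        (1 + C\<^sup>2 * (1 / mu_h Vh ahat ghat k))))"
proof -
  obtain BV where BV: "finite BV" "independent BV" "span BV = Vh" "card BV = d"
    and VhS: "subspace Vh" using Vh unfolding dim_subspaces_alt by auto
  have Vs_mem: "\<iota> u + w \<in> Vsum" if "w \<in> Vh" for u w using that unfolding Vsum_def by blast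
  have VhVs: "Vh \<subseteq> Vsum" using Vs_mem[of _ 0] linear_0[OF iota(1)] by (metis add_0 subsetI)
  have iVs: "\<iota> u \<in> Vsum" for u using Vs_mem[of 0 u] subspace_0[OF VhS] by simp
  have VsS: "subspace Vsum"
    unfolding subspace_def
  proof (intro conjI ballI allI)
    show "0 \<in> Vsum" using VhVs subspace_0[OF VhS] by auto
  next
    fix x y assume "x \<in> Vsum" "y \<in> Vsum"
    then obtain u1 w1 u2 w2 where "x = \<iota> u1 + w1" "w1 \<in> Vh" "y = \<iota> u2 + w2" "w2 \<in> Vh"
      unfolding Vsum_def by blast
    then have "x + y = \<iota> (u1 + u2) + (w1 + w2)" "w1 + w2 \<in> Vh"
      using linear_add[OF iota(1)] subspace_add[OF VhS] by (auto simp: algebra_simps)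
    then show "x + y \<in> Vsum" using Vs_mem by metis
  next
    fix c x assume "x \<in> Vsum"
    then obtain u1 w1 where "x = \<iota> u1 + w1" "w1 \<in> Vh" unfolding Vsum_def by blast
    then have "c *\<^sub>R x = \<iota> (c *\<^sub>R u1) + c *\<^sub>R w1" "c *\<^sub>R w1 \<in> Vh"
      using linear_scale[OF iota(1)] subspace_scale[OF VhS] by (auto simp: algebra_simps)
    then show "c *\<^sub>R x \<in> Vsum" using Vs_mem by metis
  qed
  have bilh: "bilinear_on_set Vh ahat" using bl_mono[OF ahat_bil VhVs] .
  have linh: "linear_on_set Vh ghat" using lo_mono[OF ghat_lin VhVs] .
  obtain M where M0: "M \<ge> 0" and M: "\<forall>w\<in>Vh. ghat w \<bullet> ghat w \<le> M * ahat w w"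
    using fin_proj_bound[OF VhS bilh _ ahat_pd_h linh BV(1)] ahat_sym VhVs BV(3) span_superset[of BV]
    by (metis (no_types, lifting) subset_iff)
  define q where "q w = (ghat w \<bullet> ghat w) / ahat w w" for w
  have q0: "0 \<le> q w" if "w \<in> Vh" for w
    using that ahat_psd VhVs unfolding q_def by (auto intro!: divide_nonneg_nonneg)
  have qM: "q w \<le> M" if w: "w \<in> Vh" for w
  proof (cases "w = 0")
    case True then show ?thesis using M0 bl_zeroL[OF VhS bilh subspace_0[OF VhS]] unfolding q_def by simp
  next
    case False
    then have "0 < ahat w w" using ahat_pd_h w by auto
    then show ?thesis using M w unfolding q_def by (simp add: divide_le_eq)
  qed
  have PhVh: "Ph u \<in> Vh" if "u \<in> Vsum" for u using Ph that by blast
  have Pho: "ahat (u - Ph u) vh = 0" if "u \<in> Vsum" "vh \<in> Vh" for u vh using Ph that by blast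
  have Ph_uniq: "Ph x = y" if x: "x \<in> Vsum" and y: "y \<in> Vh" and o: "\<forall>vh\<in>Vh. ahat (x - y) vh = 0" for x y
  proof -
    define z where "z = Ph x - y"
    have zVh: "z \<in> Vh" unfolding z_def using subspace_diff[OF VhS PhVh[OF x] y] .
    have zVs: "z \<in> Vsum" using zVh VhVs by auto
    have yVs: "y \<in> Vsum" using y VhVs by auto
    have PVs: "Ph x \<in> Vsum" using PhVh[OF x] VhVs by auto
    have e: "z = (x - y) - (x - Ph x)" unfolding z_def by simp
    have "ahat z z = ahat (x - y) z - ahat (x - Ph x) z"
      unfolding e[of ] using bl_diffL[OF VsS ahat_bil, of "x - y" "x - Ph x" z]
        subspace_diff[OF VsS x yVs] subspace_diff[OF VsS x PVs] zVs e by metis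
    also have "\<dots> = 0" using o zVh Pho[OF x zVh] by simp
    finally have "z = 0" using ahat_pd_h zVh by (metis less_irrefl)
    then show ?thesis unfolding z_def by simp
  qed
  define L where "L v = Ph (\<iota> v)" for v
  have LVh: "L v \<in> Vh" for v unfolding L_def using PhVh[OF iVs] .
  have Llin: "linear L"
  proof (rule linearI)
    fix x y
    have "Ph (\<iota> x + \<iota> y) = Ph (\<iota> x) + Ph (\<iota> y)"
    proof (rule Ph_uniq)
      show "\<iota> x + \<iota> y \<in> Vsum" using subspace_add[OF VsS iVs iVs] .
      show "Ph (\<iota> x) + Ph (\<iota> y) \<in> Vh" using subspace_add[OF VhS PhVh[OF iVs] PhVh[OF iVs]] .
      show "\<forall>vh\<in>Vh. ahat (\<iota> x + \<iota> y - (Ph (\<iota> x) + Ph (\<iota> y))) vh = 0"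
      proof
        fix vh assume vh: "vh \<in> Vh"
        have e: "\<iota> x + \<iota> y - (Ph (\<iota> x) + Ph (\<iota> y)) = (\<iota> x - Ph (\<iota> x)) + (\<iota> y - Ph (\<iota> y))" by simp
        have m1: "\<iota> x - Ph (\<iota> x) \<in> Vsum" "\<iota> y - Ph (\<iota> y) \<in> Vsum"
          using subspace_diff[OF VsS iVs] PhVh[OF iVs] VhVs by auto
        show "ahat (\<iota> x + \<iota> y - (Ph (\<iota> x) + Ph (\<iota> y))) vh = 0"
          unfolding e using bl_addL[OF ahat_bil m1] vh VhVs Pho[OF iVs vh] by auto
      qed
    qed
    then show "L (x + y) = L x + L y" unfolding L_def using linear_add[OF iota(1)] by simp
  next
    fix c x
    have "Ph (c *\<^sub>R \<iota> x) = c *\<^sub>R Ph (\<iota> x)"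
    proof (rule Ph_uniq)
      show "c *\<^sub>R \<iota> x \<in> Vsum" using subspace_scale[OF VsS iVs] .
      show "c *\<^sub>R Ph (\<iota> x) \<in> Vh" using subspace_scale[OF VhS PhVh[OF iVs]] .
      show "\<forall>vh\<in>Vh. ahat (c *\<^sub>R \<iota> x - c *\<^sub>R Ph (\<iota> x)) vh = 0"
      proof
        fix vh assume vh: "vh \<in> Vh"
        have e: "c *\<^sub>R \<iota> x - c *\<^sub>R Ph (\<iota> x) = c *\<^sub>R (\<iota> x - Ph (\<iota> x))" by (simp add: algebra_simps)
        have m1: "\<iota> x - Ph (\<iota> x) \<in> Vsum"
          using subspace_diff[OF VsS iVs] PhVh[OF iVs] VhVs by auto
        show "ahat (c *\<^sub>R \<iota> x - c *\<^sub>R Ph (\<iota> x)) vh = 0"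
          unfolding e using bl_scaleL[OF ahat_bil m1] vh VhVs Pho[OF iVs vh] by auto
      qed
    qed
    then show "L (c *\<^sub>R x) = c *\<^sub>R L x" unfolding L_def using linear_scale[OF iota(1)] by simp
  qed
  define quot where "quot v = (\<gamma> v \<bullet> \<gamma> v) / (v \<bullet> v)" for v
  have quot0: "0 \<le> quot v" for v unfolding quot_def by simp
  have KEY: "quot v \<le> (if L v = 0 then 0 else q (L v)) + C\<^sup>2" if v0: "v \<noteq> 0" for v
  proof -
    define u where "u = \<iota> v"
    define p where "p = L v"
    define r where "r = u - p"
    have uVs: "u \<in> Vsum" unfolding u_def using iVs .
    have pVh: "p \<in> Vh" unfolding p_def using LVh .
    have pVs: "p \<in> Vsum" using pVh VhVs by auto
    have rVs: "r \<in> Vsum" unfolding r_def using subspace_diff[OF VsS uVs pVs] .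
    have upr: "u = p + r" unfolding r_def by simp
    have rp: "ahat r p = 0" unfolding r_def p_def L_def u_def using Pho[OF iVs] LVh[unfolded L_def] by auto
    have pr: "ahat p r = 0" using rp ahat_sym pVs rVs by auto
    have Au: "ahat u u = v \<bullet> v" unfolding u_def using ahat_V by simp
    have Aupr: "ahat u u = ahat p p + ahat r r"
    proof -
      have "ahat u u = ahat p u + ahat r u" using bl_addL[OF ahat_bil pVs rVs uVs] upr by simp
      also have "\<dots> = ahat p p + ahat p r + (ahat r p + ahat r r)"
        using bl_addR[OF ahat_bil pVs rVs pVs] bl_addR[OF ahat_bil pVs rVs rVs] upr by simp
      finally show ?thesis using rp pr by simp
    qed
    have vv: "0 < v \<bullet> v" using v0 by simp
    have Ap: "0 \<le> ahat p p" and Ar: "0 \<le> ahat r r" using ahat_psd pVs rVs by auto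
    have gv: "\<gamma> v = ghat p + ghat r" using ghat_V lo_add[OF ghat_lin pVs rVs] upr unfolding u_def by metis
    have gr: "norm (ghat r) \<le> C * sqrt (ahat r r)"
      using Ch uVs unfolding r_def p_def L_def u_def by blast
    have nq: "\<gamma> v \<bullet> \<gamma> v = (norm (\<gamma> v))^2" by (simp add: power2_norm_eq_inner)
    show ?thesis
    proof (cases "p = 0")
      case True
      have "\<gamma> v = ghat r" using gv True lo_zero[OF ghat_lin rVs] by simp
      then have "norm (\<gamma> v) \<le> C * sqrt (v \<bullet> v)" using gr Aupr Au True bl_zeroL[OF VsS ahat_bil pVs] by simp
      then have "(norm (\<gamma> v))^2 \<le> (C * sqrt (v \<bullet> v))^2" by (rule power_mono) simp
      also have "\<dots> = C^2 * (v \<bullet> v)" using vv by (simp add: power_mult_distrib)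
      finally have "quot v \<le> C^2" unfolding quot_def nq using vv by (simp add: divide_le_eq)
      then show ?thesis using True p_def by simp
    next
      case False
      have Ap': "0 < ahat p p" using ahat_pd_h pVh False by auto
      have np: "norm (ghat p) = sqrt (q p) * sqrt (ahat p p)"
        unfolding q_def using Ap' by (simp add: real_sqrt_mult[symmetric] norm_eq_sqrt_inner)
      have "norm (\<gamma> v) \<le> sqrt (q p) * sqrt (ahat p p) + C * sqrt (ahat r r)"
        unfolding gv using norm_triangle_ineq[of "ghat p" "ghat r"] np gr by linarith
      then have "(norm (\<gamma> v))^2 \<le> (sqrt (q p) * sqrt (ahat p p) + C * sqrt (ahat r r))^2"
        by (rule power_mono) simp
      also have "\<dots> \<le> ((sqrt (q p))^2 + C^2) * ((sqrt (ahat p p))^2 + (sqrt (ahat r r))^2)" by (rule cs2)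
      also have "\<dots> = (q p + C^2) * (v \<bullet> v)" using q0[OF pVh] Ap Ar Aupr Au by simp
      finally have "quot v \<le> q p + C^2" unfolding quot_def nq using vv by (simp add: divide_le_eq)
      then show ?thesis using False p_def by simp
    qed
  qed
  have quotM: "quot v \<le> M + C\<^sup>2" if "v \<noteq> 0" for v
    using KEY[OF that] qM[OF LVh, of v] M0 by (auto split: if_splits)
  define fh where "fh H = (INF w\<in>H - {0}. q w)" for H
  define fV where "fV H = (INF v\<in>H - {0}. quot v)" for H
  have muh: "mu_h Vh ahat ghat k = (SUP H\<in>dim_subspaces Vh k. fh H)" for k
    unfolding mu_h_def fh_def q_def by simp
  have muV: "mu_V \<gamma> k = (SUP H\<in>dim_subspaces UNIV k. fV H)" for k
    unfolding mu_V_def fV_def quot_def by simp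
  have fh_bd: "0 \<le> fh H \<and> fh H \<le> M" if hyp: "H \<in> dim_subspaces Vh k" "1 \<le> k" for H k
  proof -
    obtain h where h: "h \<in> H" "h \<noteq> 0" using dim_sub_nz[OF hyp] by blast
    have HV: "H \<subseteq> Vh" using dim_sub_sub[OF hyp(1)] .
    have bb: "bdd_below (q ` (H - {0}))" using q0 HV by (intro bdd_belowI[of _ 0]) auto
    have "fh H \<le> q h" unfolding fh_def using h by (intro cINF_lower[OF bb]) auto
    moreover have "0 \<le> fh H" unfolding fh_def using h q0 HV by (intro cINF_greatest) auto
    ultimately show ?thesis using qM h HV by force
  qed
  have fV_bd: "0 \<le> fV H \<and> fV H \<le> M + C\<^sup>2" if hyp: "H \<in> dim_subspaces UNIV k" "1 \<le> k" for H k
  proof -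
    obtain h where h: "h \<in> H" "h \<noteq> 0" using dim_sub_nz[OF hyp] by blast
    have bb: "bdd_below (quot ` (H - {0}))" using quot0 by (intro bdd_belowI[of _ 0]) auto
    have "fV H \<le> quot h" unfolding fV_def using h by (intro cINF_lower[OF bb]) auto
    moreover have "0 \<le> fV H" unfolding fV_def using h quot0 by (intro cINF_greatest) auto
    ultimately show ?thesis using quotM h by force
  qed
  have muh0: "0 \<le> mu_h Vh ahat ghat k" and bddh: "bdd_above (fh ` dim_subspaces Vh k)"
    if hyp: "1 \<le> k" "k \<le> d" for k
  proof -
    obtain T where T: "T \<subseteq> BV" "card T = k" "finite T" using obtain_subset_with_card_n[of k BV] hyp BV(4) by metis
    have "span T \<in> dim_subspaces Vh k" unfolding dim_subspaces_alt
      using T independent_mono[OF BV(2) T(1)] span_mono[OF T(1)] BV(3) by auto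
    moreover show bb: "bdd_above (fh ` dim_subspaces Vh k)" using fh_bd hyp by (intro bdd_aboveI[of _ M]) auto
    ultimately show "0 \<le> mu_h Vh ahat ghat k" unfolding muh
      using fh_bd[OF _ hyp(1)] by (meson cSUP_upper order_trans)
  qed
  have muV0: "0 \<le> mu_V \<gamma> k" if hyp: "1 \<le> k" "dim_subspaces (UNIV::'v set) k \<noteq> {}" for k
  proof -
    obtain H where H: "H \<in> dim_subspaces (UNIV::'v set) k" using hyp by auto
    have bb: "bdd_above (fV ` dim_subspaces UNIV k)" using fV_bd hyp by (intro bdd_aboveI[of _ "M + C\<^sup>2"]) auto
    show ?thesis unfolding muV using fV_bd[OF H hyp(1)] cSUP_upper[OF H bb] by linarith
  qed
  have part1: "mu_V \<gamma> k \<le> mu_h Vh ahat ghat k + C\<^sup>2"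
    if k: "1 \<le> k" "k \<le> d" "dim_subspaces (UNIV::'v set) k \<noteq> {}" for k
  proof -
    have "fV H \<le> mu_h Vh ahat ghat k + C\<^sup>2" if H: "H \<in> dim_subspaces UNIV k" for H
    proof -
      obtain B where B: "finite B" "independent B" "span B = H" "card B = k" and HS: "subspace H"
        using H unfolding dim_subspaces_alt by auto
      have bb: "bdd_below (quot ` (H - {0}))" using quot0 by (intro bdd_belowI[of _ 0]) auto
      show ?thesis
      proof (cases "inj_on L H")
        case True
        have H': "L ` H \<in> dim_subspaces Vh k" unfolding dim_subspaces_alt
        proof (intro CollectI conjI exI)
          show "L ` H \<subseteq> Vh" using LVh by auto
          show "subspace (L ` H)" using linear_subspace_image[OF Llin HS] .
          show "finite (L ` B)" using B by simp
          show "independent (L ` B)" using linear_independent_injective_image[OF Llin B(2)] True B(3) by simp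
          show "span (L ` B) = L ` H" using linear_span_image[OF Llin] B(3) by simp
          have "inj_on L B" using True span_superset[of B] B(3) inj_on_subset by blast
          then show "card (L ` B) = k" using card_image B(4) by metis
        qed
        have "fV H - C\<^sup>2 \<le> fh (L ` H)" unfolding fh_def
        proof (rule cINF_greatest)
          show "L ` H - {0} \<noteq> {}" using dim_sub_nz[OF H' k(1)] by auto
          fix w assume w: "w \<in> L ` H - {0}"
          then obtain v where v: "v \<in> H" "w = L v" by auto
          have v0: "v \<noteq> 0" using v w linear_0[OF Llin] by auto
          have "fV H \<le> quot v" unfolding fV_def using v v0 by (intro cINF_lower[OF bb]) auto
          also have "\<dots> \<le> q w + C\<^sup>2" using KEY[OF v0] v w by simp
          finally show "fV H - C\<^sup>2 \<le> q w" by simp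
        qed
        also have "fh (L ` H) \<le> mu_h Vh ahat ghat k" unfolding muh using cSUP_upper[OF H' bddh[OF k(1,2)]] .
        finally show ?thesis by simp
      next
        case False
        then obtain x y where xy: "x \<in> H" "y \<in> H" "x \<noteq> y" "L x = L y" unfolding inj_on_def by blast
        define v where "v = x - y"
        have v: "v \<in> H" "v \<noteq> 0" "L v = 0" unfolding v_def using subspace_diff[OF HS xy(1,2)] xy(3,4)
          linear_diff[OF Llin] by auto
        have "fV H \<le> quot v" unfolding fV_def using v by (intro cINF_lower[OF bb]) auto
        also have "\<dots> \<le> C\<^sup>2" using KEY[OF v(2)] v(3) by simp
        finally show ?thesis using muh0[OF k(1,2)] by linarith
      qed
    qed
    then show ?thesis unfolding muV using k(3) by (intro cSUP_least) auto
  qed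
  show ?thesis
  proof (intro conjI allI impI)
    fix k assume "1 \<le> k \<and> k \<le> d \<and> dim_subspaces (UNIV::'v set) k \<noteq> {}"
    then show "mu_V \<gamma> k \<le> mu_h Vh ahat ghat k + C\<^sup>2" using part1 by blast
  next
    show "let d' = card {k\<in>{1..d}. 0 < mu_h Vh ahat ghat k} in
          \<forall>k. 1 \<le> k \<and> k \<le> d' \<and> dim_subspaces (UNIV::'v set) k \<noteq> {} \<longrightarrow>
            lam (mu_V \<gamma> k) \<ge> ereal ((1 / mu_h Vh ahat ghat k) /
                                        (1 + C\<^sup>2 * (1 / mu_h Vh ahat ghat k)))"
      unfolding Let_def
    proof (intro allI impI)
      fix k assume a: "1 \<le> k \<and> k \<le> card {k\<in>{1..d}. 0 < mu_h Vh ahat ghat k} \<and> dim_subspaces (UNIV::'v set) k \<noteq> {}"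
      have "card {k\<in>{1..d}. 0 < mu_h Vh ahat ghat k} \<le> card {1..d}" by (intro card_mono) auto
      then have kd: "k \<le> d" using a by simp
      define m where "m = mu_h Vh ahat ghat k"
      define \<mu> where "\<mu> = mu_V \<gamma> k"
      have m0: "0 \<le> m" unfolding m_def using muh0 a kd by auto
      have mu0: "0 \<le> \<mu>" unfolding \<mu>_def using muV0 a by auto
      have le: "\<mu> \<le> m + C\<^sup>2" unfolding \<mu>_def m_def using part1 a kd by auto
      have "lam \<mu> \<ge> ereal ((1 / m) / (1 + C\<^sup>2 * (1 / m)))"
      proof (cases "\<mu> = 0")
        case True then show ?thesis unfolding lam_def by simp
      next
        case False
        then have mup: "0 < \<mu>" using mu0 by simp
        show ?thesis
        proof (cases "m = 0")
          case True then show ?thesis using False mup unfolding lam_def by simp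
        next
          case mF: False
          then have mp: "0 < m" using m0 by simp
          have e: "(1 / m) / (1 + C\<^sup>2 * (1 / m)) = 1 / (m + C\<^sup>2)" using mp
            by (simp add: field_simps)
          have "1 / (m + C\<^sup>2) \<le> 1 / \<mu>" using mup le by (simp add: frac_le)
          then show ?thesis using False unfolding lam_def e by simp
        qed
      qed
      then show "lam (mu_V \<gamma> k) \<ge> ereal ((1 / mu_h Vh ahat ghat k) / (1 + C\<^sup>2 * (1 / mu_h Vh ahat ghat k)))"
        unfolding m_def \<mu>_def .
    qed
  qed
qed

end
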